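(* Let $d$ be a positive integer and let $M$ be the $d\times d$ lower triangular integer matrix with entries $M_{ij}=\binom{i}{j}$ for $1\leqslant j\leqslant i\leqslant d$ and $M_{ij}=0$ for $j>i$. Call a vector $r\in\mathbb{R}^d$ stable if for every $k\in\mathbb{N}_{>0}$ the last coordinate of $M^k r$ is an integer. Then the set of all stable vectors is a discrete subgroup of $\mathbb{R}^d$. *)

theory Defs
  imports Complex_Main "Jordan_Normal_Form.Matrix"
begin

text \<open>Vectors of R^d are modelled as JNF vectors in carrier_vec d, with indices 0..d-1;
  paper index i (1-based) corresponds to JNF index i-1.\<close>

definition binom_mat :: "nat \<Rightarrow> int mat" where
  "binom_mat d = mat d d (\<lambda>(i, j). int (Suc i choose Suc j))"

definition vec_dist :: "nat \<Rightarrow> real vec \<Rightarrow> real vec \<Rightarrow> real" where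
  "vec_dist d r s = sqrt (\<Sum>i<d. (r $ i - s $ i)^2)"

definition stable :: "nat \<Rightarrow> real vec \<Rightarrow> bool" where
  "stable d r \<longleftrightarrow> r \<in> carrier_vec d \<and>
     (\<forall>k::nat. k > 0 \<longrightarrow>
        ((map_mat real_of_int (binom_mat d)) ^\<^sub>m k *\<^sub>v r) $ (d - 1) \<in> \<int>)"

definition is_subgroup_vec :: "nat \<Rightarrow> real vec set \<Rightarrow> bool" where
  "is_subgroup_vec d S \<longleftrightarrow> S \<subseteq> carrier_vec d \<and> 0\<^sub>v d \<in> S \<and>
     (\<forall>x\<in>S. \<forall>y\<in>S. x + y \<in> S) \<and> (\<forall>x\<in>S. - x \<in> S)"

definition discrete_vec :: "nat \<Rightarrow> real vec set \<Rightarrow> bool" where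
  "discrete_vec d S \<longleftrightarrow>
     (\<forall>r\<in>S. \<exists>e>0. \<forall>s\<in>S. vec_dist d r s < e \<longrightarrow> s = r)"

end

theory Submission imports Defs "HOL-Computational_Algebra.Polynomial" begin

definition PM :: "nat \<Rightarrow> real \<Rightarrow> real mat" where
  "PM d k = mat d d (\<lambda>(i,j). if j \<le> i then real (Suc i choose Suc j) * k ^ (i - j) else 0)"

lemma binom_sum:
  fixes k :: real
  assumes "j \<le> i"
  shows "(\<Sum>l=j..i. real (Suc i choose Suc l) * k ^ (i - l) * real (Suc l choose Suc j))
        = real (Suc i choose Suc j) * (k + 1) ^ (i - j)"
proof -
  have "(\<Sum>l=j..i. real (Suc i choose Suc l) * k ^ (i - l) * real (Suc l choose Suc j))
      = (\<Sum>l=j..i. real (Suc i choose Suc j) * (real ((i - j) choose (l - j)) * k ^ (i - l)))"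
  proof (rule sum.cong[OF refl])
    fix l assume l: "l \<in> {j..i}"
    have "(Suc i choose Suc l) * (Suc l choose Suc j) = (Suc i choose Suc j) * ((Suc i - Suc j) choose (Suc l - Suc j))"
      using l by (intro choose_mult) auto
    hence "real (Suc i choose Suc l) * real (Suc l choose Suc j) = real (Suc i choose Suc j) * real ((i - j) choose (l - j))"
      by (metis diff_Suc_Suc of_nat_mult)
    thus "real (Suc i choose Suc l) * k ^ (i - l) * real (Suc l choose Suc j) = real (Suc i choose Suc j) * (real ((i - j) choose (l - j)) * k ^ (i - l))"
      by (simp add: algebra_simps del: binomial_Suc_Suc)
  qed
  also have "\<dots> = real (Suc i choose Suc j) * (\<Sum>l=j..i. real ((i - j) choose (l - j)) * k ^ (i - l))"
    by (simp add: sum_distrib_left)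
  also have "(\<Sum>l=j..i. real ((i - j) choose (l - j)) * k ^ (i - l)) = (\<Sum>t=0..i-j. real ((i - j) choose t) * k ^ (i - j - t))"
  proof -
    have "(\<Sum>t=0..i-j. real ((i - j) choose t) * k ^ (i - j - t)) = (\<Sum>l=0+j..(i-j)+j. real ((i - j) choose (l - j)) * k ^ (i - l))"
      by (subst sum.shift_bounds_cl_nat_ivl) (intro sum.cong, auto simp: assms add.commute)
    thus ?thesis using assms by simp
  qed
  also have "\<dots> = (1 + k) ^ (i - j)"
    by (simp add: binomial_ring atLeast0AtMost)
  also have "\<dots> = (k + 1) ^ (i - j)" by (simp add: add.commute)
  finally show ?thesis .
qed

lemma pow_formula: "(map_mat real_of_int (binom_mat d)) ^\<^sub>m n = PM d (real n)"
proof (induction n)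
  case 0
  show ?case by (rule eq_matI) (auto simp: PM_def binom_mat_def)
next
  case (Suc n)
  show ?case
  proof (rule eq_matI)
    fix i j assume ij: "i < dim_row (PM d (real (Suc n)))" "j < dim_col (PM d (real (Suc n)))"
    hence i: "i < d" and j: "j < d" by (auto simp: PM_def)
    have "(map_mat real_of_int (binom_mat d) ^\<^sub>m Suc n) $$ (i, j)
       = (\<Sum>l<d. (if l \<le> i then real (Suc i choose Suc l) * real n ^ (i - l) else 0) *
                 (if j \<le> l then real (Suc l choose Suc j) else 0))"
    proof -
      have "(map_mat real_of_int (binom_mat d) ^\<^sub>m Suc n) = PM d (real n) * map_mat real_of_int (binom_mat d)"
        using Suc by simp
      thus ?thesis
        using i j by (simp add: PM_def binom_mat_def scalar_prod_def row_def col_def atLeast0LessThan del: binomial_Suc_Suc;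
            intro sum.cong; auto simp: binomial_eq_0 simp del: binomial_Suc_Suc)
    qed
    also have "\<dots> = (\<Sum>l\<in>{l\<in>{..<d}. j \<le> l \<and> l \<le> i}. real (Suc i choose Suc l) * real n ^ (i - l) * real (Suc l choose Suc j))"
      by (subst sum.inter_filter) (auto intro!: sum.cong)
    also have "{l\<in>{..<d}. j \<le> l \<and> l \<le> i} = {j..i}" using i by auto
    also have "(\<Sum>l\<in>{j..i}. real (Suc i choose Suc l) * real n ^ (i - l) * real (Suc l choose Suc j))
       = (if j \<le> i then real (Suc i choose Suc j) * (real n + 1) ^ (i - j) else 0)"
      using binom_sum by auto
    finally show "(map_mat real_of_int (binom_mat d) ^\<^sub>m Suc n) $$ (i, j) = PM d (real (Suc n)) $$ (i, j)"
      using i j by (simp add: PM_def add.commute)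
  qed (auto simp: PM_def binom_mat_def)
qed

definition FF :: "nat \<Rightarrow> real vec \<Rightarrow> real \<Rightarrow> real" where
  "FF d t k = (\<Sum>j<d. real (d choose Suc j) * k ^ (d - 1 - j) * t $ j)"

lemma last_coord:
  assumes "d > 0" "r \<in> carrier_vec d"
  shows "((map_mat real_of_int (binom_mat d)) ^\<^sub>m n *\<^sub>v r) $ (d - 1) = FF d r (real n)"
proof -
  have "((map_mat real_of_int (binom_mat d)) ^\<^sub>m n *\<^sub>v r) $ (d - 1) = (PM d (real n) *\<^sub>v r) $ (d - 1)"
    by (simp only: pow_formula)
  also have "\<dots> = FF d r (real n)"
    using assms unfolding FF_def by (simp add: PM_def scalar_prod_def row_def atLeast0LessThan del: binomial_Suc_Suc; intro sum.cong; auto)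
  finally show ?thesis .
qed

lemma stable_iff:
  assumes "d > 0"
  shows "stable d r \<longleftrightarrow> r \<in> carrier_vec d \<and> (\<forall>k::nat. k > 0 \<longrightarrow> FF d r (real k) \<in> \<int>)"
  unfolding stable_def using last_coord[OF assms] by auto

lemma FF_add: "x \<in> carrier_vec d \<Longrightarrow> y \<in> carrier_vec d \<Longrightarrow> FF d (x + y) k = FF d x k + FF d y k"
  unfolding FF_def by (simp add: sum.distrib[symmetric] algebra_simps)

lemma FF_minus: "x \<in> carrier_vec d \<Longrightarrow> y \<in> carrier_vec d \<Longrightarrow> FF d (x - y) k = FF d x k - FF d y k"
  unfolding FF_def by (simp add: sum_subtractf[symmetric] algebra_simps)

lemma FF_uminus: "x \<in> carrier_vec d \<Longrightarrow> FF d (- x) k = - FF d x k"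
  unfolding FF_def by (simp add: sum_negf[symmetric] algebra_simps)

lemma FF_zero: "FF d (0\<^sub>v d) k = 0"
  unfolding FF_def by simp

lemma FF_zero_imp:
  assumes "d > 0" "t \<in> carrier_vec d" "\<And>k. k \<in> {1..d} \<Longrightarrow> FF d t (real k) = 0"
  shows "t = 0\<^sub>v d"
proof -
  define p :: "real poly" where "p = (\<Sum>j<d. monom (real (d choose Suc j) * t $ j) (d - 1 - j))"
  have pe: "poly p x = FF d t x" for x
    unfolding p_def FF_def by (simp add: poly_sum poly_monom algebra_simps)
  have "degree p \<le> d - 1"
    unfolding p_def by (intro degree_sum_le) (auto intro: order.trans[OF degree_monom_le])
  moreover have "card (real ` {1..d}) = d"
    by (subst card_image) (auto simp: inj_on_def)
  ultimately have "p = 0"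
    using assms by (intro poly_eqI_degree[where A = "real ` {1..d}"]) (auto simp: pe)
  show ?thesis
  proof (rule eq_vecI)
    fix j assume "j < dim_vec (0\<^sub>v d)"
    hence j: "j < d" by simp
    have "coeff p (d - 1 - j) = (\<Sum>j'<d. if j' = j then real (d choose Suc j') * t $ j' else 0)"
      unfolding p_def coeff_sum coeff_monom using j by (intro sum.cong) auto
    also have "\<dots> = real (d choose Suc j) * t $ j" using j by simp
    finally have "real (d choose Suc j) * t $ j = 0" using \<open>p = 0\<close> by simp
    moreover have "d choose Suc j \<noteq> 0" using j by simp
    ultimately show "t $ j = 0\<^sub>v d $ j" using j by simp
  qed (use assms in auto)
qed

theorem mainTheorem4:
  fixes d :: nat
  assumes "d > 0"
  shows "is_subgroup_vec d {r. stable d r} \<and> discrete_vec d {r. stable d r}"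
proof
  note st = stable_iff[OF assms]
  have minus: "stable d (x - y)" if "stable d x" "stable d y" for x y
    using that unfolding st by (auto simp: FF_minus)
  show "is_subgroup_vec d {r. stable d r}"
    unfolding is_subgroup_vec_def st by (auto simp: FF_add FF_uminus FF_zero)
  show "discrete_vec d {r. stable d r}"
    unfolding discrete_vec_def
  proof (intro ballI)
    fix r assume r: "r \<in> {r. stable d r}"
    define C where "C = (\<Sum>j<d. real (d choose Suc j) * real d ^ (d - 1 - j))"
    have C0: "C \<ge> 0" unfolding C_def by (intro sum_nonneg) auto
    show "\<exists>e>0. \<forall>s\<in>{r. stable d r}. vec_dist d r s < e \<longrightarrow> s = r"
    proof (intro exI[of _ "1 / (C + 1)"] conjI ballI impI)
      show "0 < 1 / (C + 1)" using C0 by simp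
      fix s assume s: "s \<in> {r. stable d r}" and dist: "vec_dist d r s < 1 / (C + 1)"
      define t where "t = r - s"
      have rc: "r \<in> carrier_vec d" and sc: "s \<in> carrier_vec d" using r s st by auto
      have tc: "t \<in> carrier_vec d" using rc sc unfolding t_def by simp
      have ts: "stable d t" using minus r s unfolding t_def by auto
      have tb: "\<bar>t $ j\<bar> \<le> vec_dist d r s" if j: "j < d" for j
      proof -
        have "(r $ j - s $ j)^2 \<le> (\<Sum>i<d. (r $ i - s $ i)^2)"
          using j by (intro member_le_sum) auto
        hence "sqrt ((r $ j - s $ j)^2) \<le> vec_dist d r s"
          unfolding vec_dist_def by (rule real_sqrt_le_mono)
        thus ?thesis using j rc sc unfolding t_def by simp
      qed
      have "FF d t (real k) = 0" if k: "k \<in> {1..d}" for k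
      proof -
        have "\<bar>FF d t (real k)\<bar> \<le> (\<Sum>j<d. \<bar>real (d choose Suc j) * real k ^ (d - 1 - j) * t $ j\<bar>)"
          unfolding FF_def by (rule sum_abs)
        also have "\<dots> \<le> (\<Sum>j<d. real (d choose Suc j) * real d ^ (d - 1 - j) * vec_dist d r s)"
        proof (intro sum_mono)
          fix j assume j: "j \<in> {..<d}"
          have "real k ^ (d - 1 - j) \<le> real d ^ (d - 1 - j)" using k by (intro power_mono) auto
          moreover have "\<bar>t $ j\<bar> \<le> vec_dist d r s" using tb j by auto
          ultimately show "\<bar>real (d choose Suc j) * real k ^ (d - 1 - j) * t $ j\<bar> \<le> real (d choose Suc j) * real d ^ (d - 1 - j) * vec_dist d r s"
            by (simp add: abs_mult mult_mono)
        qed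
        also have "\<dots> = C * vec_dist d r s" unfolding C_def by (simp add: sum_distrib_right)
        also have "\<dots> \<le> C * (1 / (C + 1))" using C0 dist by (intro mult_left_mono) auto
        also have "\<dots> < 1" using C0 by (simp add: field_simps)
        finally have "\<bar>FF d t (real k)\<bar> < 1" .
        moreover have "FF d t (real k) \<in> \<int>" using ts k st by auto
        ultimately show ?thesis using Ints_nonzero_abs_less1 by blast
      qed
      hence "t = 0\<^sub>v d" using FF_zero_imp[OF assms tc] by blast
      show "s = r"
      proof (rule eq_vecI)
        fix i assume "i < dim_vec r"
        hence "i < d" using rc by simp
        hence "t $ i = 0" using \<open>t = 0\<^sub>v d\<close> by simp
        thus "s $ i = r $ i" using \<open>i < d\<close> rc sc unfolding t_def by simp
      qed (use rc sc in simp)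
    qed
  qed
qed

end
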